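(* Let $\boldsymbol{\lambda}\in\Delta_N$, $\boldsymbol{\nu}=(\nu_1,\dots,\nu_N)\in\mathcal{P}_1(\mathbb{R})^N$, $\theta\in[0,1]$ and $\nu^\theta=\mathrm{VMed}_{\boldsymbol{\lambda}}(\theta,\boldsymbol{\nu})$. If $\nu_1,\dots,\nu_N$ are absolutely continuous with respect to Lebesgue measure with densities $f_1,\dots,f_N\in L^1(\mathbb{R})$, then $\nu^\theta$ is absolutely continuous with a density $f_{\nu^\theta}\in L^1(\mathbb{R})$ satisfying $$\min_{1\le i\le N}f_i\le f_{\nu^\theta}\le\max_{1\le i\le N}f_i\quad\text{a.e. on }\mathbb{R}.$$ In particular, if for some $p\in[1,\infty]$ one has $f_i\in L^p(\mathbb{R})$ for $i=1,\dots,N$, then $f_{\nu^\theta}\in L^p(\mathbb{R})$ and $$\|\min_i f_i\|_{L^p(\mathbb{R})}\le\|f_{\nu^\theta}\|_{L^p(\mathbb{R})}\le\|\max_i f_i\|_{L^p(\mathbb{R})}\le\sum_{i=1}^N\|f_i\|_{L^p(\mathbb{R})}.$$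
   Context: $\Delta_N=\{(\lambda_1,\dots,\lambda_N)\in\mathbb{R}_+^N:\sum_i\lambda_i=1\}$; $\mathcal{P}_1(\mathbb{R})$ denotes Borel probability measures on $\mathbb{R}$ with finite first moment. For $\nu\in\mathcal{P}_1(\mathbb{R})$, $F_\nu(x)=\nu((-\infty,x])$ is its cdf. For $\mathbf{x}=(x_1,\dots,x_N)\in\mathbb{R}^N$, the lower and upper weighted medians are $\mathrm{M}^-_{\boldsymbol{\lambda}}(\mathbf{x})=\inf\{y\in\mathbb{R}:\sum_{i:x_i\le y}\lambda_i\ge\frac12\}$ and $\mathrm{M}^+_{\boldsymbol{\lambda}}(\mathbf{x})=\sup\{y\in\mathbb{R}:\sum_{i:x_i<y}\lambda_i\le\frac12\}$. Set $F^\pm(x)=\mathrm{M}^\pm_{\boldsymbol{\lambda}}(F_{\nu_1}(x),\dots,F_{\nu_N}(x))$ and $F_\theta=(1-\theta)F^-+\theta F^+$; $F_\theta$ is the cdf of a probability measure in $\mathcal{P}_1(\mathbb{R})$, which is denoted $\mathrm{VMed}_{\boldsymbol{\lambda}}(\theta,\boldsymbol{\nu})$ (vertical median selection). *)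

theory Defs
  imports "HOL-Probability.Probability"
begin

text \<open>Weights and measures are indexed by i < N (i.e. 0..N-1).\<close>

definition lower_wmedian :: "nat \<Rightarrow> (nat \<Rightarrow> real) \<Rightarrow> (nat \<Rightarrow> real) \<Rightarrow> real" where
  "lower_wmedian N lam x = Inf {y. (\<Sum>i\<in>{i. i < N \<and> x i \<le> y}. lam i) \<ge> 1/2}"

definition upper_wmedian :: "nat \<Rightarrow> (nat \<Rightarrow> real) \<Rightarrow> (nat \<Rightarrow> real) \<Rightarrow> real" where
  "upper_wmedian N lam x = Sup {y. (\<Sum>i\<in>{i. i < N \<and> x i < y}. lam i) \<le> 1/2}"

definition F_minus :: "nat \<Rightarrow> (nat \<Rightarrow> real) \<Rightarrow> (nat \<Rightarrow> real measure) \<Rightarrow> real \<Rightarrow> real" where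
  "F_minus N lam nu x = lower_wmedian N lam (\<lambda>i. cdf (nu i) x)"

definition F_plus :: "nat \<Rightarrow> (nat \<Rightarrow> real) \<Rightarrow> (nat \<Rightarrow> real measure) \<Rightarrow> real \<Rightarrow> real" where
  "F_plus N lam nu x = upper_wmedian N lam (\<lambda>i. cdf (nu i) x)"

definition F_theta :: "nat \<Rightarrow> (nat \<Rightarrow> real) \<Rightarrow> real \<Rightarrow> (nat \<Rightarrow> real measure) \<Rightarrow> real \<Rightarrow> real" where
  "F_theta N lam \<theta> nu x = (1 - \<theta>) * F_minus N lam nu x + \<theta> * F_plus N lam nu x"

text \<open>The probability measure on the reals whose cdf is F_theta (unique when it exists).\<close>
definition VMed :: "nat \<Rightarrow> (nat \<Rightarrow> real) \<Rightarrow> real \<Rightarrow> (nat \<Rightarrow> real measure) \<Rightarrow> real measure" where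
  "VMed N lam \<theta> nu = (SOME \<mu>. prob_space \<mu> \<and> sets \<mu> = sets borel \<and>
      (\<forall>x. cdf \<mu> x = F_theta N lam \<theta> nu x))"

definition Lp_mem :: "ennreal \<Rightarrow> (real \<Rightarrow> real) \<Rightarrow> bool" where
  "Lp_mem p f \<longleftrightarrow> f \<in> borel_measurable lborel \<and>
     (if p = \<infinity> then esssup lborel (\<lambda>x. ereal \<bar>f x\<bar>) < \<infinity>
      else integrable lborel (\<lambda>x. \<bar>f x\<bar> powr enn2real p))"

definition Lp_norm :: "ennreal \<Rightarrow> (real \<Rightarrow> real) \<Rightarrow> real" where
  "Lp_norm p f = (if p = \<infinity> then real_of_ereal (esssup lborel (\<lambda>x. ereal \<bar>f x\<bar>))
      else (LINT x|lborel. \<bar>f x\<bar> powr enn2real p) powr (1 / enn2real p))"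

end

theory Submission
  imports Defs
begin

locale wm = fixes N :: nat and lam :: "nat \<Rightarrow> real"
  assumes lam_nonneg: "\<forall>i<N. lam i \<ge> 0" and lam_sum: "(\<Sum>i<N. lam i) = 1"
begin

lemma N_pos: "N > 0"
  using lam_sum by (cases N) auto

lemma ssum_mono:
  assumes "\<And>i. i < N \<Longrightarrow> P i \<Longrightarrow> Q i"
  shows "(\<Sum>i\<in>{i. i < N \<and> P i}. lam i) \<le> (\<Sum>i\<in>{i. i < N \<and> Q i}. lam i)"
  by (rule sum_mono2) (use assms lam_nonneg in auto)

lemma ssum_all:
  assumes "\<And>i. i < N \<Longrightarrow> P i"
  shows "(\<Sum>i\<in>{i. i < N \<and> P i}. lam i) = 1"
proof -
  have "{i. i < N \<and> P i} = {..<N}" using assms by auto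
  then show ?thesis using lam_sum by simp
qed

lemma ssum_none:
  assumes "\<And>i. i < N \<Longrightarrow> \<not> P i"
  shows "(\<Sum>i\<in>{i. i < N \<and> P i}. lam i) = 0"
proof -
  have e: "{i. i < N \<and> P i} = {}" using assms by auto
  show ?thesis unfolding e by simp
qed

lemma fin_ne: "finite ((x::nat\<Rightarrow>real) ` {..<N})" "(x::nat\<Rightarrow>real) ` {..<N} \<noteq> {}"
  using N_pos by auto

lemma le_Max: "i < N \<Longrightarrow> (x::nat\<Rightarrow>real) i \<le> Max (x ` {..<N})"
  by (rule Max_ge) (auto simp: fin_ne)

lemma Min_le: "i < N \<Longrightarrow> Min ((x::nat\<Rightarrow>real) ` {..<N}) \<le> x i"
  by (rule Min_le) (auto simp: fin_ne)

definition "LS (x::nat\<Rightarrow>real) = {y. (\<Sum>i\<in>{i. i < N \<and> x i \<le> y}. lam i) \<ge> 1/2}"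
definition "US (x::nat\<Rightarrow>real) = {y. (\<Sum>i\<in>{i. i < N \<and> x i < y}. lam i) \<le> 1/2}"

lemma LS_mem: "Max (x ` {..<N}) \<in> LS x"
  unfolding LS_def using ssum_all[of "\<lambda>i. x i \<le> Max (x ` {..<N})"] le_Max by auto

lemma LS_bdd: "t \<in> LS x \<Longrightarrow> Min (x ` {..<N}) \<le> t"
proof (rule ccontr)
  assume "t \<in> LS x" "\<not> Min (x ` {..<N}) \<le> t"
  then have "(\<Sum>i\<in>{i. i < N \<and> x i \<le> t}. lam i) = 0"
  proof (intro ssum_none)
    fix i assume "i < N"
    then have "Min (x ` {..<N}) \<le> x i" by (rule Min_le)
    then show "\<not> x i \<le> t" using \<open>\<not> Min (x ` {..<N}) \<le> t\<close> by linarith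
  qed
  with \<open>t \<in> LS x\<close> show False unfolding LS_def by auto
qed

lemma US_mem: "Min (x ` {..<N}) \<in> US x"
proof -
  have "(\<Sum>i\<in>{i. i < N \<and> x i < Min (x ` {..<N})}. lam i) = 0"
    using Min_le[of _ x] by (intro ssum_none) (simp add: not_less)
  then show ?thesis unfolding US_def by simp
qed

lemma US_bdd: "t \<in> US x \<Longrightarrow> t \<le> Max (x ` {..<N})"
proof (rule ccontr)
  assume "t \<in> US x" "\<not> t \<le> Max (x ` {..<N})"
  then have "(\<Sum>i\<in>{i. i < N \<and> x i < t}. lam i) = 1"
  proof (intro ssum_all)
    fix i assume "i < N"
    then have "x i \<le> Max (x ` {..<N})" by (rule le_Max)
    then show "x i < t" using \<open>\<not> t \<le> Max (x ` {..<N})\<close> by linarith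
  qed
  with \<open>t \<in> US x\<close> show False unfolding US_def by auto
qed

lemma lower_eq: "lower_wmedian N lam x = Inf (LS x)"
  unfolding lower_wmedian_def LS_def ..
lemma upper_eq: "upper_wmedian N lam x = Sup (US x)"
  unfolding upper_wmedian_def US_def ..

lemma LS_bddb: "bdd_below (LS x)" by (rule bdd_belowI[where m="Min (x ` {..<N})"]) (rule LS_bdd)
lemma US_bdda: "bdd_above (US x)" by (rule bdd_aboveI[where M="Max (x ` {..<N})"]) (rule US_bdd)

lemma lower_shift:
  assumes "\<And>i. i < N \<Longrightarrow> y i \<le> x i + D"
  shows "lower_wmedian N lam y \<le> lower_wmedian N lam x + D"
proof -
  have "Inf (LS y) - D \<le> Inf (LS x)"
  proof (rule cInf_greatest)
    show "LS x \<noteq> {}" using LS_mem by auto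
    fix t assume t: "t \<in> LS x"
    have "(\<Sum>i\<in>{i. i < N \<and> x i \<le> t}. lam i) \<le> (\<Sum>i\<in>{i. i < N \<and> y i \<le> t + D}. lam i)"
      by (rule ssum_mono) (use assms in force)
    then have "t + D \<in> LS y"
      using t unfolding LS_def by simp
    then have "Inf (LS y) \<le> t + D" by (intro cInf_lower LS_bddb)
    then show "Inf (LS y) - D \<le> t" by simp
  qed
  then show ?thesis by (simp add: lower_eq)
qed

lemma upper_shift:
  assumes "\<And>i. i < N \<Longrightarrow> y i \<le> x i + D"
  shows "upper_wmedian N lam y \<le> upper_wmedian N lam x + D"
proof -
  have "Sup (US y) \<le> Sup (US x) + D"
  proof (rule cSup_least)
    show "US y \<noteq> {}" using US_mem by auto
    fix t assume t: "t \<in> US y"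
    have "(\<Sum>i\<in>{i. i < N \<and> x i < t - D}. lam i) \<le> (\<Sum>i\<in>{i. i < N \<and> y i < t}. lam i)"
      by (rule ssum_mono) (use assms in force)
    then have "t - D \<in> US x"
      using t unfolding US_def by simp
    then have "t - D \<le> Sup (US x)" by (intro cSup_upper US_bdda)
    then show "t \<le> Sup (US x) + D" by simp
  qed
  then show ?thesis by (simp add: upper_eq)
qed

lemma lower_bounds: "Min (x ` {..<N}) \<le> lower_wmedian N lam x" "lower_wmedian N lam x \<le> Max (x ` {..<N})"
  unfolding lower_eq
   apply (rule cInf_greatest) using LS_mem LS_bdd apply auto[2]
  by (rule cInf_lower[OF LS_mem LS_bddb])

lemma upper_bounds: "Min (x ` {..<N}) \<le> upper_wmedian N lam x" "upper_wmedian N lam x \<le> Max (x ` {..<N})"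
  unfolding upper_eq
   apply (rule cSup_upper[OF US_mem US_bdda])
  apply (rule cSup_least) using US_mem US_bdd by auto


lemma convex_between:
  fixes \<theta> X Y m M :: real
  assumes "0 \<le> \<theta>" "\<theta> \<le> 1" "m \<le> X" "X \<le> M" "m \<le> Y" "Y \<le> M"
  shows "m \<le> (1-\<theta>)*X + \<theta>*Y" "(1-\<theta>)*X + \<theta>*Y \<le> M"
proof -
  have a: "(1-\<theta>)*m \<le> (1-\<theta>)*X" "(1-\<theta>)*X \<le> (1-\<theta>)*M" using assms by (auto intro!: mult_left_mono)
  have b: "\<theta>*m \<le> \<theta>*Y" "\<theta>*Y \<le> \<theta>*M" using assms by (auto intro!: mult_left_mono)
  show "m \<le> (1-\<theta>)*X + \<theta>*Y" using a b by (simp add: algebra_simps)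
  show "(1-\<theta>)*X + \<theta>*Y \<le> M" using a b by (simp add: algebra_simps)
qed

lemma FT_diff:
  assumes th: "0 \<le> \<theta>" "\<theta> \<le> 1"
  shows "Min ((\<lambda>i. cdf (nu i) b - cdf (nu i) a) ` {..<N}) \<le> F_theta N lam \<theta> nu b - F_theta N lam \<theta> nu a"
    "F_theta N lam \<theta> nu b - F_theta N lam \<theta> nu a \<le> Max ((\<lambda>i. cdf (nu i) b - cdf (nu i) a) ` {..<N})"
proof -
  define d where "d = (\<lambda>i. cdf (nu i) b - cdf (nu i) a)"
  define xa where "xa = (\<lambda>i. cdf (nu i) a)"
  define xb where "xb = (\<lambda>i. cdf (nu i) b)"
  have dM: "xb i \<le> xa i + Max (d ` {..<N})" if "i < N" for i
  proof -
    have "d i \<le> Max (d ` {..<N})" using that by (rule le_Max)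
    then show ?thesis unfolding d_def xa_def xb_def by linarith
  qed
  have dm: "xa i \<le> xb i + - Min (d ` {..<N})" if "i < N" for i
  proof -
    have "Min (d ` {..<N}) \<le> d i" using that by (rule Min_le)
    then show ?thesis unfolding d_def xa_def xb_def by linarith
  qed
  have l1: "lower_wmedian N lam xb \<le> lower_wmedian N lam xa + Max (d ` {..<N})"
    by (rule lower_shift) (rule dM)
  have l2: "lower_wmedian N lam xa \<le> lower_wmedian N lam xb + - Min (d ` {..<N})"
    by (rule lower_shift) (rule dm)
  have u1: "upper_wmedian N lam xb \<le> upper_wmedian N lam xa + Max (d ` {..<N})"
    by (rule upper_shift) (rule dM)
  have u2: "upper_wmedian N lam xa \<le> upper_wmedian N lam xb + - Min (d ` {..<N})"
    by (rule upper_shift) (rule dm)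
  have e: "F_theta N lam \<theta> nu b - F_theta N lam \<theta> nu a =
    (1-\<theta>) * (lower_wmedian N lam xb - lower_wmedian N lam xa) + \<theta> * (upper_wmedian N lam xb - upper_wmedian N lam xa)"
    unfolding F_theta_def F_minus_def F_plus_def xa_def xb_def by (simp add: algebra_simps)
  show "Min ((\<lambda>i. cdf (nu i) b - cdf (nu i) a) ` {..<N}) \<le> F_theta N lam \<theta> nu b - F_theta N lam \<theta> nu a"
    unfolding e d_def[symmetric] by (rule convex_between(1)[OF th, where M="Max (d ` {..<N})"]) (use l1 l2 u1 u2 in linarith)+
  show "F_theta N lam \<theta> nu b - F_theta N lam \<theta> nu a \<le> Max ((\<lambda>i. cdf (nu i) b - cdf (nu i) a) ` {..<N})"
    unfolding e d_def[symmetric] by (rule convex_between(2)[OF th, where m="Min (d ` {..<N})"]) (use l1 l2 u1 u2 in linarith)+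
qed

lemma FT_range:
  assumes th: "0 \<le> \<theta>" "\<theta> \<le> 1"
  shows "Min ((\<lambda>i. cdf (nu i) t) ` {..<N}) \<le> F_theta N lam \<theta> nu t"
    "F_theta N lam \<theta> nu t \<le> Max ((\<lambda>i. cdf (nu i) t) ` {..<N})"
  unfolding F_theta_def F_minus_def F_plus_def
  by (rule convex_between[OF th]; rule lower_bounds upper_bounds)+

end

lemma fbm_measure_Ioc:
  assumes "finite_borel_measure M" "a \<le> b"
  shows "measure M {a<..b} = cdf M b - cdf M a"
proof -
  interpret finite_borel_measure M by fact
  have "cdf M a \<le> cdf M b" using assms(2) by (rule cdf_nondecreasing)
  then show ?thesis using emeasure_Ioc[OF assms(2)] by (simp add: measure_def)
qed

lemma measure_le_from_cdf:
  assumes M1: "finite_borel_measure M1" and M2: "finite_borel_measure M2"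
    and le: "\<And>a b. a \<le> b \<Longrightarrow> cdf M1 b - cdf M1 a \<le> cdf M2 b - cdf M2 a"
    and A: "A \<in> sets borel"
  shows "emeasure M1 A \<le> emeasure M2 A"
proof -
  interpret m1: finite_borel_measure M1 by fact
  interpret m2: finite_borel_measure M2 by fact
  define G where "G x = cdf M2 x - cdf M1 x" for x
  have mono: "G x \<le> G y" if "x \<le> y" for x y using le[OF that] unfolding G_def by simp
  have rc: "continuous (at_right a) G" for a
    unfolding G_def by (intro continuous_diff m1.cdf_is_right_cont m2.cdf_is_right_cont)
  have bot: "(G \<longlongrightarrow> 0) at_bot"
    using tendsto_diff[OF m2.cdf_lim_at_bot m1.cdf_lim_at_bot] unfolding G_def by simp
  have top: "(G \<longlongrightarrow> measure M2 (space M2) - measure M1 (space M1)) at_top"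
    using tendsto_diff[OF m2.cdf_lim_at_top m1.cdf_lim_at_top] unfolding G_def by simp
  have Gnn: "0 \<le> G x" for x
    by (rule tendsto_upperbound[OF bot]) (auto simp: eventually_at_bot_linorder intro!: exI[of _ x] mono)
  have mnn: "0 \<le> measure M2 (space M2) - measure M1 (space M1)"
    by (rule tendsto_lowerbound[OF top]) (auto simp: Gnn)
  define S where "S = interval_measure G"
  have S: "finite_borel_measure S"
    unfolding S_def by (rule finite_borel_measure_interval_measure[OF mono rc bot top mnn])
  interpret s: finite_borel_measure S by fact
  have cdfS: "cdf S = G" unfolding S_def by (rule cdf_interval_measure[OF mono rc bot])
  have SU: "measure S UNIV = measure M2 (space M2) - measure M1 (space M1)"
    using interval_measure_UNIV[OF mono rc bot top mnn] mnn unfolding S_def by (simp add: measure_def)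
  have sb: "sets borel = sigma_sets UNIV (range (\<lambda>(a, b). {a<..b::real}))"
    by (subst borel_sigma_sets_Ioc) (rule sets_measure_of, auto)
  have ist: "Int_stable (range (\<lambda>(a, b). {a<..b::real}))"
    by (auto simp: Int_stable_def Int_greaterThanAtMost)
  have cl: "range (\<lambda>(a, b). {a<..b::real}) \<subseteq> Pow UNIV" by auto
  have "A \<in> sigma_sets UNIV (range (\<lambda>(a, b). {a<..b::real}))" using A sb by simp
  with ist cl have eq: "measure M1 A + measure S A = measure M2 A"
  proof (induction rule: sigma_sets_induct_disjoint)
    case (basic A)
    then obtain a b where Aeq: "A = {a<..b}" by auto
    show ?case
    proof (cases "a \<le> b")
      case True
      then show ?thesis unfolding Aeq
        using fbm_measure_Ioc[OF M1 True] fbm_measure_Ioc[OF M2 True] fbm_measure_Ioc[OF S True]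
        by (simp add: cdfS G_def)
    next
      case False then show ?thesis unfolding Aeq by simp
    qed
  next
    case empty show ?case by simp
  next
    case (compl A)
    then have Ab: "A \<in> sets borel" using sb by simp
    have "measure M1 (UNIV - A) = measure M1 UNIV - measure M1 A"
      using m1.finite_measure_compl[of A] Ab by (simp add: m1.borel_UNIV m1.M_is_borel)
    moreover have "measure M2 (UNIV - A) = measure M2 UNIV - measure M2 A"
      using m2.finite_measure_compl[of A] Ab by (simp add: m2.borel_UNIV m2.M_is_borel)
    moreover have "measure S (UNIV - A) = measure S UNIV - measure S A"
      using s.finite_measure_compl[of A] Ab by (simp add: s.borel_UNIV s.M_is_borel)
    ultimately show ?case using compl.IH SU by (simp add: m1.borel_UNIV m2.borel_UNIV)
  next
    case (union A)
    then have Ab: "range A \<subseteq> sets borel" using sb by simp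
    have "(\<lambda>i. measure M1 (A i)) sums measure M1 (\<Union>i. A i)"
      using m1.finite_measure_UNION[of A] Ab union by (simp add: m1.M_is_borel)
    moreover have "(\<lambda>i. measure S (A i)) sums measure S (\<Union>i. A i)"
      using s.finite_measure_UNION[of A] Ab union by (simp add: s.M_is_borel)
    ultimately have "(\<lambda>i. measure M1 (A i) + measure S (A i)) sums (measure M1 (\<Union>i. A i) + measure S (\<Union>i. A i))"
      by (rule sums_add)
    moreover have "(\<lambda>i. measure M2 (A i)) sums measure M2 (\<Union>i. A i)"
      using m2.finite_measure_UNION[of A] Ab union by (simp add: m2.M_is_borel)
    ultimately show ?case using union.IH sums_unique2 by simp
  qed
  have "emeasure M1 A = ennreal (measure M1 A)" by (simp add: m1.emeasure_eq_measure)
  also have "\<dots> \<le> ennreal (measure M2 A)" using eq measure_nonneg[of S A] by (intro ennreal_leI) linarith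
  also have "\<dots> = emeasure M2 A" by (simp add: m2.emeasure_eq_measure)
  finally show ?thesis .
qed

lemma dens_set_integral:
  fixes w :: "real \<Rightarrow> real"
  assumes w: "integrable lborel w" and wn: "AE x in lborel. 0 \<le> w x" and A: "A \<in> sets borel"
  shows "ennreal (set_lebesgue_integral lborel A w) = emeasure (density lborel (\<lambda>x. ennreal (w x))) A"
proof -
  have wm: "w \<in> borel_measurable lborel" using w by (rule borel_measurable_integrable)
  have Al: "A \<in> sets lborel" using A by simp
  have "ennreal (set_lebesgue_integral lborel A w) = (\<integral>\<^sup>+ x. ennreal (indicator A x * w x) \<partial>lborel)"
    unfolding set_lebesgue_integral_def
    by (subst nn_integral_eq_integral)
      (use wn integrable_mult_indicator[OF Al w] in \<open>auto simp: indicator_def\<close>)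
  also have "\<dots> = (\<integral>\<^sup>+ x. ennreal (w x) * indicator A x \<partial>lborel)"
    by (intro nn_integral_cong) (auto simp: indicator_def)
  also have "\<dots> = emeasure (density lborel (\<lambda>x. ennreal (w x))) A"
    using wm Al by (subst emeasure_density) auto
  finally show ?thesis .
qed

lemma dens_le:
  fixes u v :: "real \<Rightarrow> real"
  assumes u: "integrable lborel u" and v: "integrable lborel v"
    and un: "AE x in lborel. 0 \<le> u x" and vn: "AE x in lborel. 0 \<le> v x"
    and le: "\<And>A. A \<in> sets borel \<Longrightarrow> emeasure (density lborel (\<lambda>x. ennreal (u x))) A \<le> emeasure (density lborel (\<lambda>x. ennreal (v x))) A"
  shows "AE x in lborel. u x \<le> v x"
proof -
  have "AE x in lborel. 0 \<le> v x - u x"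
  proof (rule sigma_finite_measure.density_nonneg[OF sigma_finite_lborel])
    show "integrable lborel (\<lambda>x. v x - u x)" using u v by simp
    fix A :: "real set" assume A: "A \<in> sets lborel"
    then have Ab: "A \<in> sets borel" by simp
    have Iv: "0 \<le> set_lebesgue_integral lborel A v"
      unfolding set_lebesgue_integral_def
      by (rule integral_nonneg_AE) (use vn in \<open>auto simp: indicator_def\<close>)
    have "ennreal (set_lebesgue_integral lborel A u) \<le> ennreal (set_lebesgue_integral lborel A v)"
      using le[OF Ab] dens_set_integral[OF u un Ab] dens_set_integral[OF v vn Ab] by simp
    then have "set_lebesgue_integral lborel A u \<le> set_lebesgue_integral lborel A v"
      using Iv by (simp add: ennreal_le_iff)
    moreover have "set_lebesgue_integral lborel A (\<lambda>x. v x - u x) = set_lebesgue_integral lborel A v - set_lebesgue_integral lborel A u"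
      by (rule set_integral_diff) (use integrable_mult_indicator[OF A u] integrable_mult_indicator[OF A v] in \<open>auto simp: set_integrable_def\<close>)
    ultimately show "0 \<le> set_lebesgue_integral lborel A (\<lambda>x. v x - u x)" by simp
  qed
  then show ?thesis by auto
qed

lemma powr_superadd2:
  fixes x y q :: real
  assumes "0 \<le> x" "0 \<le> y" "1 \<le> q"
  shows "x powr q + y powr q \<le> (x + y) powr q"
proof -
  have k: "z powr q = z * z powr (q - 1)" if "0 \<le> z" for z :: real
  proof (cases "z = 0")
    case True then show ?thesis using assms by simp
  next
    case False then have "0 < z" using that by simp
    then show ?thesis by (simp add: powr_mult_base)
  qed
  have "x * x powr (q - 1) \<le> x * (x + y) powr (q - 1)"
    using assms by (intro mult_left_mono powr_mono2) auto
  moreover have "y * y powr (q - 1) \<le> y * (x + y) powr (q - 1)"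
    using assms by (intro mult_left_mono powr_mono2) auto
  ultimately have "x powr q + y powr q \<le> (x + y) * (x + y) powr (q - 1)"
    using k assms by (simp add: algebra_simps)
  also have "\<dots> = (x + y) powr q" using k[of "x+y"] assms by simp
  finally show ?thesis .
qed

lemma powr_superadd:
  fixes a :: "nat \<Rightarrow> real" and q :: real
  assumes "finite I" "\<And>i. i \<in> I \<Longrightarrow> 0 \<le> a i" "1 \<le> q"
  shows "(\<Sum>i\<in>I. a i powr q) \<le> (\<Sum>i\<in>I. a i) powr q"
  using assms
proof (induction I rule: finite_induct)
  case empty then show ?case by simp
next
  case (insert j I)
  have "(\<Sum>i\<in>insert j I. a i powr q) = a j powr q + (\<Sum>i\<in>I. a i powr q)" using insert by simp
  also have "\<dots> \<le> a j powr q + (\<Sum>i\<in>I. a i) powr q" using insert by simp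
  also have "\<dots> \<le> (a j + (\<Sum>i\<in>I. a i)) powr q"
    using insert by (intro powr_superadd2) (auto intro!: sum_nonneg)
  also have "\<dots> = (\<Sum>i\<in>insert j I. a i) powr q" using insert by simp
  finally show ?case .
qed

lemma esssup_nonneg_lborel:
  fixes u :: "real \<Rightarrow> ereal"
  assumes "AE x in lborel. 0 \<le> u x"
  shows "0 \<le> esssup lborel u"
proof (rule ccontr)
  assume "\<not> 0 \<le> esssup lborel u"
  then have lt: "esssup lborel u < 0" by simp
  have "AE x in (lborel::real measure). False"
    using esssup_AE[of u lborel] assms by eventually_elim (use lt in auto)
  then have "ae_filter (lborel::real measure) = bot" by (simp add: eventually_False)
  then show False using Measure_Space.ae_filter_eq_bot_iff[of "lborel::real measure"] by simp
qed


lemma Lp_part: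
  fixes f :: "nat \<Rightarrow> real \<Rightarrow> real" and g :: "real \<Rightarrow> real" and p :: ennreal and N :: nat
  assumes N: "N > 0" and fm: "\<forall>i<N. f i \<in> borel_measurable lborel" and gm: "g \<in> borel_measurable lborel"
    and bnd: "AE x in lborel. Min ((\<lambda>i. f i x) ` {..<N}) \<le> g x \<and> g x \<le> Max ((\<lambda>i. f i x) ` {..<N})"
    and fnn: "\<forall>i<N. AE x in lborel. f i x \<ge> 0"
    and p: "p \<ge> 1" and mem: "\<forall>i<N. Lp_mem p (f i)"
  shows "Lp_mem p g \<and>
         Lp_norm p (\<lambda>x. Min ((\<lambda>i. f i x) ` {..<N})) \<le> Lp_norm p g \<and>
         Lp_norm p g \<le> Lp_norm p (\<lambda>x. Max ((\<lambda>i. f i x) ` {..<N})) \<and>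
         Lp_norm p (\<lambda>x. Max ((\<lambda>i. f i x) ` {..<N})) \<le> (\<Sum>i<N. Lp_norm p (f i))"
proof -
  define l where "l x = Min ((\<lambda>i. f i x) ` {..<N})" for x
  define h where "h x = Max ((\<lambda>i. f i x) ` {..<N})" for x
  have fin: "finite ((\<lambda>i. f i x) ` {..<N})" "(\<lambda>i. f i x) ` {..<N} \<noteq> {}" for x using N by auto
  have hex: "\<exists>j<N. h x = f j x" for x using Max_in[OF fin[of x]] unfolding h_def by auto
  have lex: "\<exists>j<N. l x = f j x" for x using Min_in[OF fin[of x]] unfolding l_def by auto
  have lm: "l \<in> borel_measurable lborel" unfolding l_def using fm by (intro borel_measurable_Min) auto
  have hm: "h \<in> borel_measurable lborel" unfolding h_def using fm by (intro borel_measurable_Max) auto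
  have fnnall: "AE x in lborel. \<forall>i\<in>{..<N}. 0 \<le> f i x" using fnn by (intro eventually_ball_finite) auto
  have lnn: "AE x in lborel. 0 \<le> l x" using fnnall by eventually_elim (metis lex lessThan_iff)
  have bnd': "AE x in lborel. l x \<le> g x \<and> g x \<le> h x" using bnd unfolding l_def h_def .
  have absle: "AE x in lborel. \<bar>l x\<bar> \<le> \<bar>g x\<bar> \<and> \<bar>g x\<bar> \<le> \<bar>h x\<bar>" using lnn bnd' by eventually_elim auto
  have habs: "\<bar>h x\<bar> \<le> (\<Sum>i<N. \<bar>f i x\<bar>)" for x
  proof -
    obtain j where "j < N" "h x = f j x" using hex by blast
    then show ?thesis by (auto intro!: member_le_sum)
  qed
  show ?thesis
  proof (cases "p = \<infinity>")
    case True
    define E where "E i = esssup lborel (\<lambda>x. ereal \<bar>f i x\<bar>)" for i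
    have Efin: "E i < \<infinity>" if "i < N" for i using mem that True unfolding Lp_mem_def E_def by auto
    have Enn: "0 \<le> E i" for i unfolding E_def by (rule esssup_nonneg_lborel) auto
    have AEf: "AE x in lborel. \<forall>i\<in>{..<N}. ereal \<bar>f i x\<bar> \<le> E i"
      unfolding E_def by (intro eventually_ball_finite) (auto intro: esssup_AE)
    have Hle: "esssup lborel (\<lambda>x. ereal \<bar>h x\<bar>) \<le> (\<Sum>i<N. E i)"
    proof (rule esssup_I)
      show "(\<lambda>x. ereal \<bar>h x\<bar>) \<in> borel_measurable lborel" using hm by measurable
      show "AE x in lborel. ereal \<bar>h x\<bar> \<le> (\<Sum>i<N. E i)" using AEf
      proof eventually_elim
        case (elim x)
        have "ereal \<bar>h x\<bar> \<le> ereal (\<Sum>i<N. \<bar>f i x\<bar>)" using habs by simp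
        also have "\<dots> = (\<Sum>i<N. ereal \<bar>f i x\<bar>)" by simp
        also have "\<dots> \<le> (\<Sum>i<N. E i)" using elim by (intro sum_mono) auto
        finally show ?case .
      qed
    qed
    have mg: "(\<lambda>x. ereal \<bar>g x\<bar>) \<in> borel_measurable lborel" using gm by measurable
    have ml: "(\<lambda>x. ereal \<bar>l x\<bar>) \<in> borel_measurable lborel" using lm by measurable
    have "AE x in lborel. ereal \<bar>g x\<bar> \<le> ereal \<bar>h x\<bar>" using absle by eventually_elim auto
    then have Gle: "esssup lborel (\<lambda>x. ereal \<bar>g x\<bar>) \<le> esssup lborel (\<lambda>x. ereal \<bar>h x\<bar>)"
      by (rule esssup_AE_mono[OF mg])
    have "AE x in lborel. ereal \<bar>l x\<bar> \<le> ereal \<bar>g x\<bar>" using absle by eventually_elim auto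
    then have Lle: "esssup lborel (\<lambda>x. ereal \<bar>l x\<bar>) \<le> esssup lborel (\<lambda>x. ereal \<bar>g x\<bar>)"
      by (rule esssup_AE_mono[OF ml])
    have Ee: "E i = ereal (real_of_ereal (E i))" if "i < N" for i
      using Efin[OF that] Enn[of i] by (cases "E i") auto
    have Sfin: "(\<Sum>i<N. E i) = ereal (\<Sum>i<N. real_of_ereal (E i))"
    proof -
      have "(\<Sum>i<N. E i) = (\<Sum>i<N. ereal (real_of_ereal (E i)))" using Ee by (intro sum.cong) auto
      then show ?thesis by simp
    qed
    have Lnn: "0 \<le> esssup lborel (\<lambda>x. ereal \<bar>l x\<bar>)" by (rule esssup_nonneg_lborel) auto
    have Gnn: "0 \<le> esssup lborel (\<lambda>x. ereal \<bar>g x\<bar>)" by (rule esssup_nonneg_lborel) auto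
    have Hnn: "0 \<le> esssup lborel (\<lambda>x. ereal \<bar>h x\<bar>)" by (rule esssup_nonneg_lborel) auto
    have Sfin2: "(\<Sum>i<N. E i) < \<infinity>" unfolding Sfin by simp
    have Hfin: "esssup lborel (\<lambda>x. ereal \<bar>h x\<bar>) < \<infinity>" using Hle Sfin2 by (rule order.strict_trans1)
    have Gfin: "esssup lborel (\<lambda>x. ereal \<bar>g x\<bar>) < \<infinity>" using Gle Hfin by (rule order.strict_trans1)
    have "Lp_mem p g" unfolding Lp_mem_def if_P[OF True] using gm Gfin by blast
    moreover have "Lp_norm p l \<le> Lp_norm p g" unfolding Lp_norm_def if_P[OF True]
      by (rule real_of_ereal_positive_mono[OF Lnn Lle]) (use Gfin in simp)
    moreover have "Lp_norm p g \<le> Lp_norm p h" unfolding Lp_norm_def if_P[OF True]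
      by (rule real_of_ereal_positive_mono[OF Gnn Gle]) (use Hfin in simp)
    moreover have "Lp_norm p h \<le> (\<Sum>i<N. Lp_norm p (f i))"
    proof -
      have "Lp_norm p h \<le> real_of_ereal (\<Sum>i<N. E i)" unfolding Lp_norm_def if_P[OF True]
        by (rule real_of_ereal_positive_mono[OF Hnn Hle]) (use Sfin2 in simp)
      also have "\<dots> = (\<Sum>i<N. real_of_ereal (E i))" unfolding Sfin by simp
      also have "\<dots> = (\<Sum>i<N. Lp_norm p (f i))" unfolding Lp_norm_def if_P[OF True] E_def ..
      finally show ?thesis .
    qed
    ultimately show ?thesis unfolding l_def h_def by blast
  next
    case False
    define q where "q = enn2real p"
    have q1: "1 \<le> q" unfolding q_def using enn2real_mono[OF p] False by (simp add: top.not_eq_extremum)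
    have fi: "integrable lborel (\<lambda>x. \<bar>f i x\<bar> powr q)" if "i < N" for i
      using mem that False unfolding Lp_mem_def q_def by auto
    have Si: "integrable lborel (\<lambda>x. \<Sum>i<N. \<bar>f i x\<bar> powr q)" by (rule Bochner_Integration.integrable_sum) (use fi in auto)
    have powle: "\<bar>f j x\<bar> powr q \<le> (\<Sum>i<N. \<bar>f i x\<bar> powr q)" if "j < N" for j x
      using that by (intro member_le_sum) auto
    have hpow: "\<bar>h x\<bar> powr q \<le> (\<Sum>i<N. \<bar>f i x\<bar> powr q)" for x
      using hex[of x] powle by auto
    have lpow: "\<bar>l x\<bar> powr q \<le> (\<Sum>i<N. \<bar>f i x\<bar> powr q)" for x
      using lex[of x] powle by auto
    have "AE x in lborel. norm (\<bar>h x\<bar> powr q) \<le> norm (\<Sum>i<N. \<bar>f i x\<bar> powr q)"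
      using hpow by (intro AE_I2) (simp add: sum_nonneg)
    then have hi: "integrable lborel (\<lambda>x. \<bar>h x\<bar> powr q)"
      by (rule Bochner_Integration.integrable_bound[OF Si, rotated]) (use hm in measurable)
    have "AE x in lborel. norm (\<bar>l x\<bar> powr q) \<le> norm (\<Sum>i<N. \<bar>f i x\<bar> powr q)"
      using lpow by (intro AE_I2) (simp add: sum_nonneg)
    then have li: "integrable lborel (\<lambda>x. \<bar>l x\<bar> powr q)"
      by (rule Bochner_Integration.integrable_bound[OF Si, rotated]) (use lm in measurable)
    have AEpow: "AE x in lborel. \<bar>l x\<bar> powr q \<le> \<bar>g x\<bar> powr q \<and> \<bar>g x\<bar> powr q \<le> \<bar>h x\<bar> powr q"
      using absle by eventually_elim (use q1 in \<open>auto intro!: powr_mono2\<close>)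
    have "AE x in lborel. norm (\<bar>g x\<bar> powr q) \<le> norm (\<bar>h x\<bar> powr q)" using AEpow by eventually_elim auto
    then have gi: "integrable lborel (\<lambda>x. \<bar>g x\<bar> powr q)"
      by (rule Bochner_Integration.integrable_bound[OF hi, rotated]) (use gm in measurable)
    have "AE x in lborel. \<bar>l x\<bar> powr q \<le> \<bar>g x\<bar> powr q" using AEpow by eventually_elim auto
    then have I1: "(LINT x|lborel. \<bar>l x\<bar> powr q) \<le> (LINT x|lborel. \<bar>g x\<bar> powr q)"
      by (rule integral_mono_AE[OF li gi])
    have "AE x in lborel. \<bar>g x\<bar> powr q \<le> \<bar>h x\<bar> powr q" using AEpow by eventually_elim auto
    then have I2: "(LINT x|lborel. \<bar>g x\<bar> powr q) \<le> (LINT x|lborel. \<bar>h x\<bar> powr q)"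
      by (rule integral_mono_AE[OF gi hi])
    have q0: "0 \<le> 1 / q" using q1 by simp
    define a where "a i = (LINT x|lborel. \<bar>f i x\<bar> powr q) powr (1 / q)" for i
    have ann: "0 \<le> a i" for i unfolding a_def by simp
    have apow: "a i powr q = (LINT x|lborel. \<bar>f i x\<bar> powr q)" for i
      unfolding a_def powr_powr using q1 by (simp add: powr_one integral_nonneg)
    have "(LINT x|lborel. \<bar>h x\<bar> powr q) \<le> (LINT x|lborel. (\<Sum>i<N. \<bar>f i x\<bar> powr q))"
      by (rule integral_mono[OF hi Si]) (rule hpow)
    also have "\<dots> = (\<Sum>i<N. (LINT x|lborel. \<bar>f i x\<bar> powr q))" by (rule Bochner_Integration.integral_sum) (use fi in auto)
    also have "\<dots> = (\<Sum>i<N. a i powr q)" using apow by simp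
    also have "\<dots> \<le> (\<Sum>i<N. a i) powr q" using ann q1 by (intro powr_superadd) auto
    finally have I3: "(LINT x|lborel. \<bar>h x\<bar> powr q) \<le> (\<Sum>i<N. a i) powr q" .
    have "Lp_mem p g" unfolding Lp_mem_def using False gm gi q_def by simp
    moreover have "Lp_norm p l \<le> Lp_norm p g" unfolding Lp_norm_def if_not_P[OF False] q_def[symmetric]
      by (rule powr_mono2[OF q0 _ I1]) (simp add: integral_nonneg)
    moreover have "Lp_norm p g \<le> Lp_norm p h" unfolding Lp_norm_def if_not_P[OF False] q_def[symmetric]
      by (rule powr_mono2[OF q0 _ I2]) (simp add: integral_nonneg)
    moreover have "Lp_norm p h \<le> (\<Sum>i<N. Lp_norm p (f i))"
    proof -
      have "Lp_norm p h \<le> ((\<Sum>i<N. a i) powr q) powr (1 / q)" unfolding Lp_norm_def if_not_P[OF False] q_def[symmetric]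
        by (rule powr_mono2[OF q0 _ I3]) (simp add: integral_nonneg)
      also have "\<dots> = (\<Sum>i<N. a i)" unfolding powr_powr using q1 ann by (simp add: powr_one sum_nonneg)
      also have "\<dots> = (\<Sum>i<N. Lp_norm p (f i))" unfolding a_def Lp_norm_def if_not_P[OF False] q_def ..
      finally show ?thesis .
    qed
    ultimately show ?thesis unfolding l_def h_def by blast
  qed
qed

lemma dens_measure:
  fixes w :: "real \<Rightarrow> real"
  assumes w: "integrable lborel w" and wn: "AE x in lborel. 0 \<le> w x" and A: "A \<in> sets borel"
  shows "measure (density lborel (\<lambda>x. ennreal (w x))) A = set_lebesgue_integral lborel A w"
proof -
  have "0 \<le> set_lebesgue_integral lborel A w"
    unfolding set_lebesgue_integral_def
    by (rule integral_nonneg_AE) (use wn in \<open>auto simp: indicator_def\<close>)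
  then show ?thesis unfolding measure_def dens_set_integral[OF w wn A, symmetric] by simp
qed

lemma dens_fbm:
  fixes w :: "real \<Rightarrow> real"
  assumes w: "integrable lborel w" and wn: "AE x in lborel. 0 \<le> w x"
  shows "finite_borel_measure (density lborel (\<lambda>x. ennreal (w x)))"
proof -
  have "emeasure (density lborel (\<lambda>x. ennreal (w x))) UNIV = ennreal (set_lebesgue_integral lborel UNIV w)"
    using dens_set_integral[OF w wn, of UNIV] by simp
  then have "finite_measure (density lborel (\<lambda>x. ennreal (w x)))"
    by (intro finite_measureI) simp
  then show ?thesis by (simp add: finite_borel_measure_def finite_borel_measure_axioms_def)
qed

lemma set_int_mono_pw:
  fixes u v :: "real \<Rightarrow> real"
  assumes "integrable lborel u" "integrable lborel v" "\<And>x. u x \<le> v x" "A \<in> sets borel"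
  shows "set_lebesgue_integral lborel A u \<le> set_lebesgue_integral lborel A v"
proof -
  have Al: "A \<in> sets lborel" using assms(4) by simp
  show ?thesis
    by (rule set_integral_mono)
      (use integrable_mult_indicator[OF Al assms(1)] integrable_mult_indicator[OF Al assms(2)] assms(3) in \<open>auto simp: set_integrable_def\<close>)
qed


theorem theorem4p6:
  fixes N :: nat and lam :: "nat \<Rightarrow> real" and nu :: "nat \<Rightarrow> real measure"
    and f :: "nat \<Rightarrow> real \<Rightarrow> real" and \<theta> :: real
  assumes lam_nonneg: "\<forall>i<N. lam i \<ge> 0"
    and lam_sum: "(\<Sum>i<N. lam i) = 1"
    and nu_prob: "\<forall>i<N. prob_space (nu i) \<and> sets (nu i) = sets borel"
    and nu_moment: "\<forall>i<N. integrable (nu i) (\<lambda>x. x)"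
    and theta: "0 \<le> \<theta>" "\<theta> \<le> 1"
    and f_meas: "\<forall>i<N. f i \<in> borel_measurable lborel"
    and f_nonneg: "\<forall>i<N. AE x in lborel. f i x \<ge> 0"
    and f_L1: "\<forall>i<N. integrable lborel (f i)"
    and nu_dens: "\<forall>i<N. nu i = density lborel (\<lambda>x. ennreal (f i x))"
  shows "\<exists>g. g \<in> borel_measurable lborel \<and> integrable lborel g \<and>
           (AE x in lborel. g x \<ge> 0) \<and>
           VMed N lam \<theta> nu = density lborel (\<lambda>x. ennreal (g x)) \<and>
           (AE x in lborel. Min ((\<lambda>i. f i x) ` {..<N}) \<le> g x \<and>
                            g x \<le> Max ((\<lambda>i. f i x) ` {..<N})) \<and>
           (\<forall>p::ennreal. p \<ge> 1 \<longrightarrow> (\<forall>i<N. Lp_mem p (f i)) \<longrightarrow>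
              Lp_mem p g \<and>
              Lp_norm p (\<lambda>x. Min ((\<lambda>i. f i x) ` {..<N})) \<le> Lp_norm p g \<and>
              Lp_norm p g \<le> Lp_norm p (\<lambda>x. Max ((\<lambda>i. f i x) ` {..<N})) \<and>
              Lp_norm p (\<lambda>x. Max ((\<lambda>i. f i x) ` {..<N})) \<le> (\<Sum>i<N. Lp_norm p (f i)))"
proof -
  interpret wm N lam using lam_nonneg lam_sum by unfold_locales
  have N: "N > 0" by (rule N_pos)
  have rd: "real_distribution (nu i)" if "i < N" for i
    using nu_prob that by (auto simp: real_distribution_def real_distribution_axioms_def)
  have fbm: "finite_borel_measure (nu i)" if "i < N" for i
    using real_distribution.finite_borel_measure_M[OF rd[OF that]] .
  have fint: "integrable lborel (f i)" if "i < N" for i using f_L1 that by auto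
  have fnn: "AE x in lborel. 0 \<le> f i x" if "i < N" for i using f_nonneg that by auto
  have nu_Ioc: "cdf (nu i) b - cdf (nu i) a = set_lebesgue_integral lborel {a<..b} (f i)"
    if "i < N" "a \<le> b" for i a b
    using fbm_measure_Ioc[OF fbm[OF that(1)] that(2)] dens_measure[OF fint[OF that(1)] fnn[OF that(1)], of "{a<..b}"]
      nu_dens that(1) by simp
  have cmono: "cdf (nu i) a \<le> cdf (nu i) b" if "i < N" "a \<le> b" for i a b
    using finite_borel_measure.cdf_nondecreasing[OF fbm[OF that(1)] that(2)] .
  have cnn: "0 \<le> cdf (nu i) t" if "i < N" for i t
    using finite_borel_measure.cdf_nonneg[OF fbm[OF that]] .
  have cle1: "cdf (nu i) t \<le> 1" if "i < N" for i t
    using real_distribution.cdf_bounded_prob[OF rd[OF that]] .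
  define F where "F = F_theta N lam \<theta> nu"
  have Fdiff: "Min ((\<lambda>i. cdf (nu i) b - cdf (nu i) a) ` {..<N}) \<le> F b - F a"
     "F b - F a \<le> Max ((\<lambda>i. cdf (nu i) b - cdf (nu i) a) ` {..<N})" for a b
    unfolding F_def using FT_diff[OF theta] by auto
  have Frange: "Min ((\<lambda>i. cdf (nu i) t) ` {..<N}) \<le> F t" "F t \<le> Max ((\<lambda>i. cdf (nu i) t) ` {..<N})" for t
    unfolding F_def using FT_range[OF theta] by auto
  have finI: "finite ((\<lambda>i. u i) ` {..<N})" "(\<lambda>i. u i) ` {..<N} \<noteq> {}" for u :: "nat \<Rightarrow> real"
    using N by auto
  have Minex: "\<exists>j<N. Min ((\<lambda>i. u i) ` {..<N}) = u j" for u :: "nat \<Rightarrow> real"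
    using Min_in[OF finI[of u]] by auto
  have Maxex: "\<exists>j<N. Max ((\<lambda>i. u i) ` {..<N}) = u j" for u :: "nat \<Rightarrow> real"
    using Max_in[OF finI[of u]] by auto
  have Fmono: "F a \<le> F b" if "a \<le> b" for a b
  proof -
    obtain j where j: "j < N" "Min ((\<lambda>i. cdf (nu i) b - cdf (nu i) a) ` {..<N}) = cdf (nu j) b - cdf (nu j) a"
      using Minex by blast
    show ?thesis using Fdiff(1)[of b a] j cmono[OF j(1) that] by linarith
  qed
  have sumd: "Max ((\<lambda>i. cdf (nu i) b - cdf (nu i) a) ` {..<N}) \<le> (\<Sum>i<N. cdf (nu i) b - cdf (nu i) a)"
    if "a \<le> b" for a b
  proof -
    obtain j where j: "j < N" "Max ((\<lambda>i. cdf (nu i) b - cdf (nu i) a) ` {..<N}) = cdf (nu j) b - cdf (nu j) a"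
      using Maxex by blast
    have "cdf (nu j) b - cdf (nu j) a \<le> (\<Sum>i<N. cdf (nu i) b - cdf (nu i) a)"
      by (rule member_le_sum) (use j cmono that in auto)
    then show ?thesis using j by simp
  qed
  have Frc: "continuous (at_right a) F" for a
  proof -
    have "((\<lambda>t. \<Sum>i<N. cdf (nu i) t - cdf (nu i) a) \<longlongrightarrow> (\<Sum>i<N. cdf (nu i) a - cdf (nu i) a)) (at_right a)"
      by (intro tendsto_sum tendsto_diff tendsto_const)
        (use finite_borel_measure.cdf_is_right_cont[OF fbm] in \<open>auto simp: continuous_within\<close>)
    then have lim: "((\<lambda>t. \<Sum>i<N. cdf (nu i) t - cdf (nu i) a) \<longlongrightarrow> 0) (at_right a)" by simp
    have "((\<lambda>t. F t - F a) \<longlongrightarrow> 0) (at_right a)"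
    proof (rule tendsto_sandwich[OF _ _ tendsto_const lim])
      show "\<forall>\<^sub>F t in at_right a. 0 \<le> F t - F a"
        using eventually_at_right_less[of a]
      proof eventually_elim
        case (elim t) then show ?case using Fmono[of a t] by simp
      qed
      show "\<forall>\<^sub>F t in at_right a. F t - F a \<le> (\<Sum>i<N. cdf (nu i) t - cdf (nu i) a)"
        using eventually_at_right_less[of a]
      proof eventually_elim
        case (elim t)
        then have "a \<le> t" by simp
        then show ?case using Fdiff(2)[of t a] sumd[of a t] by linarith
      qed
    qed
    then show ?thesis unfolding continuous_within by (simp add: LIM_zero_iff)
  qed
  have Fbot: "(F \<longlongrightarrow> 0) at_bot"
  proof -
    have "((\<lambda>t. \<Sum>i<N. cdf (nu i) t) \<longlongrightarrow> (\<Sum>i<N. 0)) at_bot"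
      by (intro tendsto_sum) (use finite_borel_measure.cdf_lim_at_bot[OF fbm] in auto)
    then have lim: "((\<lambda>t. \<Sum>i<N. cdf (nu i) t) \<longlongrightarrow> 0) at_bot" by simp
    show ?thesis
    proof (rule tendsto_sandwich[OF _ _ tendsto_const lim])
      show "\<forall>\<^sub>F t in at_bot. 0 \<le> F t"
      proof (intro always_eventually allI)
        fix t
        obtain j where j: "j < N" "Min ((\<lambda>i. cdf (nu i) t) ` {..<N}) = cdf (nu j) t" using Minex by blast
        then show "0 \<le> F t" using Frange(1)[of t] cnn[OF j(1), of t] by linarith
      qed
      show "\<forall>\<^sub>F t in at_bot. F t \<le> (\<Sum>i<N. cdf (nu i) t)"
      proof (intro always_eventually allI)
        fix t
        obtain j where j: "j < N" "Max ((\<lambda>i. cdf (nu i) t) ` {..<N}) = cdf (nu j) t" using Maxex by blast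
        have "cdf (nu j) t \<le> (\<Sum>i<N. cdf (nu i) t)" by (rule member_le_sum) (use j cnn in auto)
        then show "F t \<le> (\<Sum>i<N. cdf (nu i) t)" using Frange(2)[of t] j by linarith
      qed
    qed
  qed
  have Ftop: "(F \<longlongrightarrow> 1) at_top"
  proof -
    have "((\<lambda>t. 1 - (\<Sum>i<N. 1 - cdf (nu i) t)) \<longlongrightarrow> 1 - (\<Sum>i<N. 1 - 1)) at_top"
      by (intro tendsto_diff tendsto_sum tendsto_const) (use real_distribution.cdf_lim_at_top_prob[OF rd] in auto)
    then have lim: "((\<lambda>t. 1 - (\<Sum>i<N. 1 - cdf (nu i) t)) \<longlongrightarrow> 1) at_top" by simp
    show ?thesis
    proof (rule tendsto_sandwich[OF _ _ lim tendsto_const])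
      show "\<forall>\<^sub>F t in at_top. 1 - (\<Sum>i<N. 1 - cdf (nu i) t) \<le> F t"
      proof (intro always_eventually allI)
        fix t
        obtain j where j: "j < N" "Min ((\<lambda>i. cdf (nu i) t) ` {..<N}) = cdf (nu j) t" using Minex by blast
        have "1 - cdf (nu j) t \<le> (\<Sum>i<N. 1 - cdf (nu i) t)" by (rule member_le_sum) (use j cle1 in auto)
        then show "1 - (\<Sum>i<N. 1 - cdf (nu i) t) \<le> F t" using Frange(1)[of t] j by linarith
      qed
      show "\<forall>\<^sub>F t in at_top. F t \<le> 1"
      proof (intro always_eventually allI)
        fix t
        obtain j where j: "j < N" "Max ((\<lambda>i. cdf (nu i) t) ` {..<N}) = cdf (nu j) t" using Maxex by blast
        then show "F t \<le> 1" using Frange(2)[of t] cle1[OF j(1), of t] by linarith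
      qed
    qed
  qed
  define \<mu>0 where "\<mu>0 = interval_measure F"
  have rd0: "real_distribution \<mu>0" unfolding \<mu>0_def
    by (rule real_distribution_interval_measure[OF Fmono Frc Fbot Ftop])
  have cdf0: "cdf \<mu>0 = F" unfolding \<mu>0_def by (rule cdf_interval_measure[OF Fmono Frc Fbot])
  have fbm0: "finite_borel_measure \<mu>0" using real_distribution.finite_borel_measure_M[OF rd0] .
  have VM: "VMed N lam \<theta> nu = \<mu>0"
  proof -
    let ?P = "\<lambda>\<mu>. prob_space \<mu> \<and> sets \<mu> = sets borel \<and> (\<forall>x. cdf \<mu> x = F_theta N lam \<theta> nu x)"
    have "?P \<mu>0" using rd0 cdf0 unfolding F_def by (auto simp: real_distribution_def real_distribution_axioms_def)
    then have "?P (VMed N lam \<theta> nu)" unfolding VMed_def by (rule someI)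
    then have "real_distribution (VMed N lam \<theta> nu)" "cdf (VMed N lam \<theta> nu) = cdf \<mu>0"
      using cdf0 unfolding F_def by (auto simp: real_distribution_def real_distribution_axioms_def)
    then show ?thesis using rd0 by (intro cdf_unique) auto
  qed
  define h where "h x = Max ((\<lambda>i. f i x) ` {..<N})" for x
  define l where "l x = Min ((\<lambda>i. f i x) ` {..<N})" for x
  have hex: "\<exists>j<N. h x = f j x" for x unfolding h_def using Maxex[of "\<lambda>i. f i x"] by auto
  have lex: "\<exists>j<N. l x = f j x" for x unfolding l_def using Minex[of "\<lambda>i. f i x"] by auto
  have hge: "f j x \<le> h x" if "j < N" for j x unfolding h_def using that by (intro Max_ge) auto
  have lle: "l x \<le> f j x" if "j < N" for j x unfolding l_def using that by (intro Min_le) auto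
  have hm: "h \<in> borel_measurable lborel" unfolding h_def using f_meas by (intro borel_measurable_Max) auto
  have lm: "l \<in> borel_measurable lborel" unfolding l_def using f_meas by (intro borel_measurable_Min) auto
  have absS: "integrable lborel (\<lambda>x. \<Sum>i<N. \<bar>f i x\<bar>)"
    by (rule Bochner_Integration.integrable_sum) (use fint in auto)
  have sab: "\<bar>f j x\<bar> \<le> (\<Sum>i<N. \<bar>f i x\<bar>)" if "j < N" for j x
    using that by (intro member_le_sum) auto
  have Snn: "0 \<le> (\<Sum>i<N. \<bar>f i x\<bar>)" for x by (rule sum_nonneg) simp
  have hb: "norm (h x) \<le> norm (\<Sum>i<N. \<bar>f i x\<bar>)" for x
  proof -
    obtain j where "j < N" "h x = f j x" using hex by blast
    then show ?thesis using sab[of j x] Snn[of x] by simp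
  qed
  have lb: "norm (l x) \<le> norm (\<Sum>i<N. \<bar>f i x\<bar>)" for x
  proof -
    obtain j where "j < N" "l x = f j x" using lex by blast
    then show ?thesis using sab[of j x] Snn[of x] by simp
  qed
  have "AE x in lborel. norm (h x) \<le> norm (\<Sum>i<N. \<bar>f i x\<bar>)"
    using hb by (intro AE_I2) blast
  then have hint: "integrable lborel h" by (rule Bochner_Integration.integrable_bound[OF absS, rotated]) (use hm in measurable)
  have "AE x in lborel. norm (l x) \<le> norm (\<Sum>i<N. \<bar>f i x\<bar>)"
    using lb by (intro AE_I2) blast
  then have lint: "integrable lborel l" by (rule Bochner_Integration.integrable_bound[OF absS, rotated]) (use lm in measurable)
  have fnnall: "AE x in lborel. \<forall>i\<in>{..<N}. 0 \<le> f i x" using fnn by (intro eventually_ball_finite) auto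
  have lnn: "AE x in lborel. 0 \<le> l x" using fnnall by eventually_elim (metis lex lessThan_iff)
  have hnn: "AE x in lborel. 0 \<le> h x" using fnnall by eventually_elim (metis hex lessThan_iff)
  define H where "H = density lborel (\<lambda>x. ennreal (h x))"
  define L where "L = density lborel (\<lambda>x. ennreal (l x))"
  have fbmH: "finite_borel_measure H" unfolding H_def by (rule dens_fbm[OF hint hnn])
  have fbmL: "finite_borel_measure L" unfolding L_def by (rule dens_fbm[OF lint lnn])
  have HIoc: "cdf H b - cdf H a = set_lebesgue_integral lborel {a<..b} h" if "a \<le> b" for a b
    using fbm_measure_Ioc[OF fbmH that] dens_measure[OF hint hnn, of "{a<..b}"] unfolding H_def by simp
  have LIoc: "cdf L b - cdf L a = set_lebesgue_integral lborel {a<..b} l" if "a \<le> b" for a b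
    using fbm_measure_Ioc[OF fbmL that] dens_measure[OF lint lnn, of "{a<..b}"] unfolding L_def by simp
  have le1: "cdf \<mu>0 b - cdf \<mu>0 a \<le> cdf H b - cdf H a" if "a \<le> b" for a b
  proof -
    obtain j where j: "j < N" "Max ((\<lambda>i. cdf (nu i) b - cdf (nu i) a) ` {..<N}) = cdf (nu j) b - cdf (nu j) a"
      using Maxex by blast
    have "cdf \<mu>0 b - cdf \<mu>0 a \<le> cdf (nu j) b - cdf (nu j) a" using Fdiff(2)[of b a] j cdf0 by simp
    also have "\<dots> = set_lebesgue_integral lborel {a<..b} (f j)" using nu_Ioc[OF j(1) that] .
    also have "\<dots> \<le> set_lebesgue_integral lborel {a<..b} h"
      by (rule set_int_mono_pw[OF fint[OF j(1)] hint hge[OF j(1)]]) simp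
    also have "\<dots> = cdf H b - cdf H a" using HIoc[OF that] by simp
    finally show ?thesis .
  qed
  have le2: "cdf L b - cdf L a \<le> cdf \<mu>0 b - cdf \<mu>0 a" if "a \<le> b" for a b
  proof -
    obtain j where j: "j < N" "Min ((\<lambda>i. cdf (nu i) b - cdf (nu i) a) ` {..<N}) = cdf (nu j) b - cdf (nu j) a"
      using Minex by blast
    have "cdf L b - cdf L a = set_lebesgue_integral lborel {a<..b} l" using LIoc[OF that] .
    also have "\<dots> \<le> set_lebesgue_integral lborel {a<..b} (f j)"
      by (rule set_int_mono_pw[OF lint fint[OF j(1)] lle[OF j(1)]]) simp
    also have "\<dots> = cdf (nu j) b - cdf (nu j) a" using nu_Ioc[OF j(1) that] by simp
    also have "\<dots> \<le> cdf \<mu>0 b - cdf \<mu>0 a" using Fdiff(1)[of b a] j cdf0 by simp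
    finally show ?thesis .
  qed
  have muH: "emeasure \<mu>0 A \<le> emeasure H A" if "A \<in> sets borel" for A
    by (rule measure_le_from_cdf[OF fbm0 fbmH le1 that])
  have Lmu: "emeasure L A \<le> emeasure \<mu>0 A" if "A \<in> sets borel" for A
    by (rule measure_le_from_cdf[OF fbmL fbm0 le2 that])
  have sets0: "sets \<mu>0 = sets lborel" using real_distribution.events_eq_borel[OF rd0] by simp
  have ac: "absolutely_continuous lborel \<mu>0"
    unfolding absolutely_continuous_def
  proof
    fix A :: "real set" assume A: "A \<in> null_sets lborel"
    then have Ab: "A \<in> sets borel" and A0: "emeasure lborel A = 0" by auto
    have "emeasure H A = 0" unfolding H_def
      by (rule absolutely_continuousD[OF absolutely_continuousI_density]) (use hm Ab A0 in auto)
    then have "emeasure \<mu>0 A = 0" using muH[OF Ab] by simp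
    then show "A \<in> null_sets \<mu>0" using Ab sets0 by (intro null_setsI) auto
  qed
  obtain g' where g'm: "g' \<in> borel_measurable lborel" and g'd: "density lborel g' = \<mu>0"
    using sigma_finite_measure.Radon_Nikodym[OF sigma_finite_lborel ac sets0] by blast
  have int1: "(\<integral>\<^sup>+x. g' x \<partial>lborel) = 1"
  proof -
    have "emeasure (density lborel g') UNIV = (\<integral>\<^sup>+x. g' x \<partial>lborel)"
      using g'm by (simp add: emeasure_density)
    moreover have "emeasure \<mu>0 UNIV = 1"
      using prob_space.emeasure_space_1[of \<mu>0] rd0 real_distribution.space_eq_univ[OF rd0]
      by (simp add: real_distribution_def)
    ultimately show ?thesis using g'd by simp
  qed
  have fin': "AE x in lborel. g' x \<noteq> \<infinity>" by (rule nn_integral_PInf_AE[OF g'm]) (simp add: int1)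
  define g where "g x = enn2real (g' x)" for x
  have gm: "g \<in> borel_measurable lborel" unfolding g_def using g'm by measurable
  have gae: "AE x in lborel. ennreal (g x) = g' x" using fin'
    by eventually_elim (auto simp: g_def ennreal_enn2real_if)
  have dens_g: "density lborel (\<lambda>x. ennreal (g x)) = \<mu>0"
    using density_cong[of "\<lambda>x. ennreal (g x)" lborel g'] gm g'm gae g'd by simp
  have gnn: "AE x in lborel. 0 \<le> g x" by (simp add: g_def)
  have gint: "integrable lborel g"
  proof (rule integrableI_nonneg[OF gm gnn])
    have "(\<integral>\<^sup>+x. ennreal (g x) \<partial>lborel) = (\<integral>\<^sup>+x. g' x \<partial>lborel)" by (rule nn_integral_cong_AE[OF gae])
    then show "(\<integral>\<^sup>+x. ennreal (g x) \<partial>lborel) < \<infinity>" using int1 by simp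
  qed
  have gh: "AE x in lborel. g x \<le> h x"
    by (rule dens_le[OF gint hint gnn hnn]) (use muH dens_g in \<open>simp add: H_def\<close>)
  have lg: "AE x in lborel. l x \<le> g x"
    by (rule dens_le[OF lint gint lnn gnn]) (use Lmu dens_g in \<open>simp add: L_def\<close>)
  have bnd: "AE x in lborel. Min ((\<lambda>i. f i x) ` {..<N}) \<le> g x \<and> g x \<le> Max ((\<lambda>i. f i x) ` {..<N})"
    using gh lg unfolding h_def l_def by eventually_elim auto
  show ?thesis
  proof (intro exI[of _ g] conjI allI impI)
    show "g \<in> borel_measurable lborel" by (rule gm)
    show "integrable lborel g" by (rule gint)
    show "AE x in lborel. 0 \<le> g x" by (rule gnn)
    show "VMed N lam \<theta> nu = density lborel (\<lambda>x. ennreal (g x))" using VM dens_g by simp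
    show "AE x in lborel. Min ((\<lambda>i. f i x) ` {..<N}) \<le> g x \<and> g x \<le> Max ((\<lambda>i. f i x) ` {..<N})" by (rule bnd)
  next
    fix p :: ennreal assume p: "1 \<le> p" and mem: "\<forall>i<N. Lp_mem p (f i)"
    note LP = Lp_part[OF N f_meas gm bnd f_nonneg p mem]
    show "Lp_mem p g" using LP by blast
    show "Lp_norm p (\<lambda>x. Min ((\<lambda>i. f i x) ` {..<N})) \<le> Lp_norm p g" using LP by blast
    show "Lp_norm p g \<le> Lp_norm p (\<lambda>x. Max ((\<lambda>i. f i x) ` {..<N}))" using LP by blast
    show "Lp_norm p (\<lambda>x. Max ((\<lambda>i. f i x) ` {..<N})) \<le> (\<Sum>i<N. Lp_norm p (f i))" using LP by blast
  qed
qed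

end
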